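(* Let $\gamma>0$, $\delta\ge0$, $s\in(0,1]$, and let $H(u;\gamma,\delta)=C(\delta,\gamma)(1+u)^{-1-\delta}\{1+\log(1+u)\}^{-1-\gamma}$, $u>0$, where $C(\delta,\gamma)$ is the normalizing constant. Define $f_0(z)=\phi(z;0,1)$, $f_1(z)=\int_0^\infty\phi(z;0,u)H(u;\gamma,\delta)\,du$ and $f(z)=(1-s)f_0(z)+sf_1(z)$, $z\in\mathbb{R}$, where $\phi(\cdot;0,u)$ is the $N(0,u)$ density. Let $x_1,\dots,x_n\in\mathbb{R}^p$ be fixed, let $\pi(\beta,\sigma)$ be a prior density on $\mathbb{R}^p\times(0,\infty)$, and for a data set $\mathcal{D}=\{y_1,\dots,y_n\}$ define the unnormalized posterior $$\tilde\pi_\delta(\beta,\sigma\mid\mathcal{D})=\pi(\beta,\sigma)\prod_{i=1}^n\Big\{\frac1\sigma f\Big(\frac{y_i-x_i^t\beta}{\sigma}\Big)\Big\},$$ and $\tilde\pi_\delta(\beta,\sigma\mid\mathcal{D}^* )$ the analogous product over $i\in\mathcal{K}$ only, where $\mathcal{D}^*=\{y_i:i\in\mathcal{K}\}$. Let $\{1,\dots,n\}=\mathcal{K}\cup\mathcal{L}$ be a disjoint partition and suppose $y_i=y_i(\omega)$ depends on a parameter $\omega$ such that $y_i(\omega)$ is constant for $i\in\mathcal{K}$ and $|y_i(\omega)|\to\infty$ as $\omega\to\infty$ for $i\in\mathcal{L}$. Then for any compact set $K\subset\mathbb{R}^p\times(0,\infty)$, $$\frac{\tilde\pi_\delta(\beta,\sigma\mid\mathcal{D})}{\tilde\pi_\delta(\beta,\sigma\mid\mathcal{D}^*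 )}\Big/\prod_{i\in\mathcal{L}}f(y_i)\ \longrightarrow\ \sigma^{2|\mathcal{L}|\delta}$$ uniformly in $(\beta,\sigma)\in K$ as $\omega\to\infty$. In particular, the unnormalized posterior is robust (the limit equals $1$) if and only if $\delta=0$.
   Context: The ratio of unnormalized posteriors equals $\prod_{i\in\mathcal{L}}\frac1\sigma f((y_i-x_i^t\beta)/\sigma)$, and the prior density is assumed positive so that the ratio is defined. *)

theory Defs
  imports "HOL-Analysis.Analysis"
begin

definition normal_dens :: "real \<Rightarrow> real \<Rightarrow> real" where
  "normal_dens z u = exp (- (z^2) / (2 * u)) / sqrt (2 * pi * u)"

definition H_unnorm :: "real \<Rightarrow> real \<Rightarrow> real \<Rightarrow> real" where
  "H_unnorm gam del u = (1 + u) powr (- 1 - del) * (1 + ln (1 + u)) powr (- 1 - gam)"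

definition C_norm :: "real \<Rightarrow> real \<Rightarrow> real" where
  "C_norm del gam = 1 / (LBINT u:{0<..}. H_unnorm gam del u)"

definition H_dens :: "real \<Rightarrow> real \<Rightarrow> real \<Rightarrow> real" where
  "H_dens gam del u = C_norm del gam * H_unnorm gam del u"

definition f0 :: "real \<Rightarrow> real" where
  "f0 z = normal_dens z 1"

definition f1 :: "real \<Rightarrow> real \<Rightarrow> real \<Rightarrow> real" where
  "f1 gam del z = (LBINT u:{0<..}. normal_dens z u * H_dens gam del u)"

definition fmix :: "real \<Rightarrow> real \<Rightarrow> real \<Rightarrow> real \<Rightarrow> real" where
  "fmix s gam del z = (1 - s) * f0 z + s * f1 gam del z"

definition upost ::
  "('p::finite) itself \<Rightarrow> (real \<Rightarrow> real) \<Rightarrow> (real^'p \<Rightarrow> real \<Rightarrow> real) \<Rightarrow> (nat \<Rightarrow> real^'p)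
    \<Rightarrow> (nat \<Rightarrow> real) \<Rightarrow> nat set \<Rightarrow> real^'p \<Rightarrow> real \<Rightarrow> real" where
  "upost _ f prior x y I \<beta> \<sigma> = prior \<beta> \<sigma> * (\<Prod>i\<in>I. (1 / \<sigma>) * f ((y i - x i \<bullet> \<beta>) / \<sigma>))"

end

theory Submission
  imports Defs "HOL-Real_Asymp.Real_Asymp"
begin

lemma h1_nn:
  assumes gam: "(gam::real) > 0"
  shows "(\<integral>\<^sup>+x. ennreal ((1+x) powr -1 * (1+ln(1+x)) powr (-1-gam)) * indicator {0..} x \<partial>lborel) = ennreal (0 - (-(1/gam) * (1+ln(1+0)) powr (-gam)))"
proof (rule nn_integral_FTC_atLeast)
  show "(\<lambda>x::real. (1+x) powr -1 * (1+ln(1+x)) powr (-1-gam)) \<in> borel_measurable borel"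
    by measurable
  fix x :: real assume x: "0 \<le> x"
  have pos: "0 < 1 + ln (1+x)" using x by (smt (verit) ln_ge_zero)
  show "DERIV (\<lambda>x. -(1/gam) * (1+ln(1+x)) powr (-gam)) x :> (1+x) powr -1 * (1+ln(1+x)) powr (-1-gam)"
  proof -
    have "DERIV (\<lambda>x. -(1/gam) * (1+ln(1+x)) powr (-gam)) x :> -(1/gam) * ((-gam) * (1+ln(1+x)) powr (-gam - 1) * (0 + 1/(1+x) * (0+1)))"
      by (rule derivative_eq_intros refl | use x pos in simp)+
    moreover have "-gam - 1 = -1 - gam" by simp
    moreover have "-(1/gam) * ((-gam) * (1+ln(1+x)) powr (-1 - gam) * (0 + 1/(1+x) * (0+1))) = (1+x) powr -1 * (1+ln(1+x)) powr (-1-gam)"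
      using gam x by (simp add: powr_minus_divide)
    ultimately show ?thesis by simp
  qed
  show "0 \<le> (1+x) powr -1 * (1+ln(1+x)) powr (-1-gam)" by simp
next
  show "((\<lambda>x::real. -(1/gam) * (1+ln(1+x)) powr (-gam)) \<longlongrightarrow> 0) at_top"
    using gam by real_asymp
qed

lemma h1_int:
  assumes gam: "(gam::real) > 0"
  shows "integrable lborel (\<lambda>x. indicator {0..} x * ((1+x) powr -1 * (1+ln(1+x)) powr (-1-gam)))"
proof (rule Bochner_Integration.integrableI_nonneg)
  show "(\<lambda>x::real. indicator {0..} x * ((1+x) powr -1 * (1+ln(1+x)) powr (-1-gam))) \<in> borel_measurable lborel"
    by measurable
  show "AE x in lborel. 0 \<le> indicator {0..} x * ((1+x) powr -1 * (1+ln(1+x)) powr (-1-gam))"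
    by simp
  have "(\<integral>\<^sup>+x. ennreal (indicator {0..} x * ((1+x) powr -1 * (1+ln(1+x)) powr (-1-gam))) \<partial>lborel)
     = (\<integral>\<^sup>+x. ennreal ((1+x) powr -1 * (1+ln(1+x)) powr (-1-gam)) * indicator {0..} x \<partial>lborel)"
    by (intro nn_integral_cong) (auto simp: indicator_def)
  also have "\<dots> < \<infinity>" unfolding h1_nn[OF gam] by simp
  finally show "(\<integral>\<^sup>+x. ennreal (indicator {0..} x * ((1+x) powr -1 * (1+ln(1+x)) powr (-1-gam))) \<partial>lborel) < \<infinity>" .
qed

lemma H_unnorm_nonneg: "0 \<le> H_unnorm gam del u"
  by (simp add: H_unnorm_def)


lemma H_int:
  assumes gam: "(gam::real) > 0" and del: "del \<ge> 0"
  shows "integrable lborel (\<lambda>u. indicator {0<..} u * H_unnorm gam del u)"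
proof (rule Bochner_Integration.integrable_bound[OF h1_int[OF gam]])
  show "(\<lambda>u::real. indicator {0<..} u * H_unnorm gam del u) \<in> borel_measurable lborel"
    unfolding H_unnorm_def by measurable
  show "AE x in lborel. norm (indicator {0<..} x * H_unnorm gam del x) \<le> norm (indicator {0..} x * ((1+x) powr -1 * (1+ln(1+x)) powr (-1-gam)))"
  proof (rule AE_I2)
    fix x :: real
    show "norm (indicator {0<..} x * H_unnorm gam del x) \<le> norm (indicator {0..} x * ((1+x) powr -1 * (1+ln(1+x)) powr (-1-gam)))"
    proof (cases "x > 0")
      case True
      have "(1+x) powr (-1-del) \<le> (1+x) powr -1"
        by (rule powr_mono) (use True del in auto)
      then have "H_unnorm gam del x \<le> (1+x) powr -1 * (1+ln(1+x)) powr (-1-gam)"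
        unfolding H_unnorm_def by (intro mult_right_mono) auto
      then show ?thesis using True by (simp add: H_unnorm_def)
    qed (simp)
  qed
qed

lemma pos_integral:
  fixes g :: "real \<Rightarrow> real"
  assumes int: "integrable lborel g" and nn: "\<And>x. 0 \<le> g x" and pos: "\<And>x. x > 0 \<Longrightarrow> 0 < g x"
  shows "integral\<^sup>L lborel g > 0"
proof -
  have "integral\<^sup>L lborel g \<ge> 0" using nn by (simp add: integral_nonneg)
  moreover have "integral\<^sup>L lborel g \<noteq> 0"
  proof
    assume "integral\<^sup>L lborel g = 0"
    then have "AE x in lborel. g x = 0"
      using integral_nonneg_eq_0_iff_AE[OF int] nn by simp
    then have "AE x in lborel. x \<notin> {0<..<1::real}"
      by eventually_elim (use pos in force)
    then have "emeasure lborel {0<..<1::real} = 0"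
      by (subst (asm) AE_iff_measurable[of "{0<..<1}"]) auto
    then show False by simp
  qed
  ultimately show ?thesis by simp
qed

lemma C_pos:
  assumes gam: "(gam::real) > 0" and del: "del \<ge> 0"
  shows "C_norm del gam > 0"
proof -
  have "integral\<^sup>L lborel (\<lambda>u. indicator {0<..} u * H_unnorm gam del u) > 0"
  proof (rule pos_integral[OF H_int[OF gam del]])
    fix x :: real show "0 \<le> indicator {0<..} x * H_unnorm gam del x" by (simp add: H_unnorm_nonneg)
    assume "x > 0"
    then have "ln (1+x) > 0" by simp
    then have "1 + ln (1+x) \<noteq> 0" by linarith
    then show "0 < indicator {0<..} x * H_unnorm gam del x"
      using \<open>x > 0\<close> by (simp add: H_unnorm_def)
  qed
  then show ?thesis unfolding C_norm_def set_lebesgue_integral_def by simp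
qed

lemma nd_pos: "u > 0 \<Longrightarrow> normal_dens w u > 0"
  by (simp add: normal_dens_def)

lemma nd_le: "u > 0 \<Longrightarrow> normal_dens w u \<le> normal_dens 0 u"
  by (simp add: normal_dens_def divide_right_mono)

lemma nd0_le: "u > 0 \<Longrightarrow> normal_dens 0 u \<le> u powr (-1/2)"
proof -
  assume u: "u > 0"
  have "sqrt u \<le> sqrt (2*pi*u)" using u pi_gt3 by (intro real_sqrt_le_mono) auto
  then have "1 / sqrt (2*pi*u) \<le> 1 / sqrt u" using u by (intro divide_left_mono) auto
  also have "1 / sqrt u = u powr (-1/2)"
    using u by (simp add: powr_minus_divide powr_half_sqrt[symmetric])
  finally show ?thesis by (simp add: normal_dens_def)
qed

lemma nd0_le1: "u \<ge> 1 \<Longrightarrow> normal_dens 0 u \<le> 1"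
proof -
  assume u: "u \<ge> 1"
  have "2*pi*1 \<le> 2*pi*u" using u pi_gt3 by (intro mult_left_mono) auto
  then have "1 \<le> 2*pi*u" using pi_gt3 by linarith
  then have "1 \<le> sqrt (2*pi*u)" by simp
  then show ?thesis by (simp add: normal_dens_def)
qed

lemma my_powr_le1: "(x::real) \<ge> 1 \<Longrightarrow> a \<le> 0 \<Longrightarrow> x powr a \<le> 1"
  using powr_mono[of a 0 x] by simp

lemma H_le1: "(u::real) \<ge> 0 \<Longrightarrow> gam \<ge> 0 \<Longrightarrow> del \<ge> 0 \<Longrightarrow> H_unnorm gam del u \<le> 1"
proof -
  assume u: "u \<ge> 0" and g: "gam \<ge> 0" and d: "del \<ge> 0"
  have "(1+u) powr (-1-del) \<le> 1" by (rule my_powr_le1) (use u d in auto)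
  moreover have "(1+ln(1+u)) powr (-1-gam) \<le> 1" by (rule my_powr_le1) (use u g in auto)
  ultimately show ?thesis unfolding H_unnorm_def
    by (metis mult_le_one powr_ge_zero)
qed

lemma sqrt_int: "integrable lborel (\<lambda>u::real. indicator {0<..1} u * u powr (-1/2))"
proof -
  have "(\<lambda>x::real. x powr (-1/2)) integrable_on {0<..1}"
    by (rule integrable_on_powr_from_0') auto
  then have "(\<lambda>x::real. x powr (-1/2)) absolutely_integrable_on {0<..1}"
    by (rule nonnegative_absolutely_integrable_1) auto
  then have "integrable lebesgue (\<lambda>u::real. indicator {0<..1} u * u powr (-1/2))"
    by (simp add: set_integrable_def)
  moreover have "(\<lambda>u::real. indicator {0<..1} u * u powr (-1/2)) \<in> borel_measurable lborel"
    by measurable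
  ultimately show ?thesis using integrable_completion by blast
qed

lemma f1_integrable:
  assumes gam: "(gam::real) > 0" and del: "del \<ge> 0"
  shows "integrable lborel (\<lambda>u. indicator {0<..} u * (normal_dens w u * H_dens gam del u))"
proof (rule Bochner_Integration.integrable_bound)
  let ?C = "C_norm del gam"
  have C: "?C > 0" by (rule C_pos[OF gam del])
  show "integrable lborel (\<lambda>u. ?C * (indicator {0<..1} u * u powr (-1/2) + indicator {0<..} u * H_unnorm gam del u))"
    using sqrt_int H_int[OF gam del] by simp
  show "(\<lambda>u. indicator {0<..} u * (normal_dens w u * H_dens gam del u)) \<in> borel_measurable lborel"
    unfolding normal_dens_def H_dens_def H_unnorm_def by measurable
  show "AE u in lborel. norm (indicator {0<..} u * (normal_dens w u * H_dens gam del u))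
     \<le> norm (?C * (indicator {0<..1} u * u powr (-1/2) + indicator {0<..} u * H_unnorm gam del u))"
  proof (rule AE_I2)
    fix u :: real
    show "norm (indicator {0<..} u * (normal_dens w u * H_dens gam del u))
     \<le> norm (?C * (indicator {0<..1} u * u powr (-1/2) + indicator {0<..} u * H_unnorm gam del u))"
    proof (cases "u > 0")
      case True
      have Hn: "0 \<le> H_unnorm gam del u" by (rule H_unnorm_nonneg)
      have nn: "0 < normal_dens w u" using True by (rule nd_pos)
      have lhs: "norm (indicator {0<..} u * (normal_dens w u * H_dens gam del u)) = ?C * (normal_dens w u * H_unnorm gam del u)"
        using True C Hn nn by (simp add: H_dens_def abs_mult)
      have "normal_dens w u * H_unnorm gam del u \<le> indicator {0<..1} u * u powr (-1/2) + indicator {0<..} u * H_unnorm gam del u"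
      proof (cases "u \<le> 1")
        case True2: True
        have "normal_dens w u * H_unnorm gam del u \<le> u powr (-1/2) * 1"
          using order_trans[OF nd_le[OF True] nd0_le[OF True]] H_le1[of u gam del] True gam del Hn nn
          by (intro mult_mono) auto
        then show ?thesis using True True2 Hn by simp
      next
        case False
        have "normal_dens w u * H_unnorm gam del u \<le> 1 * H_unnorm gam del u"
          using order_trans[OF nd_le[OF True] nd0_le1[of u]] False Hn nn
          by (intro mult_mono) auto
        then show ?thesis using True False by simp
      qed
      then show ?thesis unfolding lhs using C True Hn
        by (simp add: abs_mult)
    qed simp
  qed
qed

lemma f1_pos:
  assumes gam: "(gam::real) > 0" and del: "del \<ge> 0"
  shows "f1 gam del w > 0"
proof -
  have "integral\<^sup>L lborel (\<lambda>u. indicator {0<..} u * (normal_dens w u * H_dens gam del u)) > 0"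
  proof (rule pos_integral[OF f1_integrable[OF gam del]])
    fix x :: real
    show "0 \<le> indicator {0<..} x * (normal_dens w x * H_dens gam del x)"
      using C_pos[OF gam del] by (auto simp: H_dens_def normal_dens_def H_unnorm_nonneg indicator_def)
    assume x: "x > 0"
    then have "ln (1+x) > 0" by simp
    then have "1 + ln (1+x) \<noteq> 0" by linarith
    then show "0 < indicator {0<..} x * (normal_dens w x * H_dens gam del x)"
      using x C_pos[OF gam del] nd_pos[OF x] by (simp add: H_dens_def H_unnorm_def)
  qed
  then show ?thesis unfolding f1_def set_lebesgue_integral_def by simp
qed

lemma f0_pos: "f0 z > 0"
  by (simp add: f0_def normal_dens_def)

lemma fmix_pos:
  assumes gam: "(gam::real) > 0" and del: "del \<ge> 0" and s: "0 < s" "s \<le> 1"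
  shows "fmix s gam del z > 0"
proof -
  have "(1-s) * f0 z \<ge> 0" using s f0_pos[of z] by simp
  moreover have "s * f1 gam del z > 0" using s f1_pos[OF gam del] by simp
  ultimately show ?thesis unfolding fmix_def by linarith
qed

definition Pf :: "real \<Rightarrow> real \<Rightarrow> real \<Rightarrow> real" where
  "Pf gam del w = \<bar>w\<bar> powr (-1-2*del) * (1+ln(1+w^2)) powr (-1-gam)"

definition Gf :: "real \<Rightarrow> real \<Rightarrow> real \<Rightarrow> real \<Rightarrow> real" where
  "Gf gam del r t = indicator {0<..} t * (exp(-1/(2*t)) / sqrt(2*pi*t) * C_norm del gam *
     ((r^2/(1+r^2*t)) powr (1+del) * ((1+ln(1+r^2))/(1+ln(1+r^2*t))) powr (1+gam)))"

definition Dlim :: "real \<Rightarrow> real \<Rightarrow> real \<Rightarrow> real" where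
  "Dlim gam del t = indicator {0<..} t * (exp(-1/(2*t)) / sqrt(2*pi*t) * C_norm del gam * (1/t) powr (1+del))"

definition Dom :: "real \<Rightarrow> real \<Rightarrow> real \<Rightarrow> real" where
  "Dom gam del t = indicator {0<..} t * (exp(-1/(2*t)) / sqrt(2*pi*t) * C_norm del gam * (1/t) powr (1+del)
      * (if t < 1 then (1/t) powr (1+gam) else 1))"

lemma Gf_lim:
  fixes t :: real assumes t: "t > 0"
  shows "((\<lambda>r. Gf gam del r t) \<longlongrightarrow> Dlim gam del t) at_top"
proof -
  have "((\<lambda>r. (r^2/(1+r^2*t)) powr (1+del) * ((1+ln(1+r^2))/(1+ln(1+r^2*t))) powr (1+gam)) \<longlongrightarrow> inverse t powr (1+del)) at_top"
    using t by real_asymp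
  then have "((\<lambda>r. (r^2/(1+r^2*t)) powr (1+del) * ((1+ln(1+r^2))/(1+ln(1+r^2*t))) powr (1+gam)) \<longlongrightarrow> (1/t) powr (1+del)) at_top"
    by (simp add: inverse_eq_divide)
  then have "((\<lambda>r. exp(-1/(2*t)) / sqrt(2*pi*t) * C_norm del gam * ((r^2/(1+r^2*t)) powr (1+del) * ((1+ln(1+r^2))/(1+ln(1+r^2*t))) powr (1+gam))) \<longlongrightarrow>
     exp(-1/(2*t)) / sqrt(2*pi*t) * C_norm del gam * (1/t) powr (1+del)) at_top"
    by (rule tendsto_mult_left)
  then show ?thesis using t by (simp add: Gf_def Dlim_def)
qed

lemma powr_claim1:
  fixes r A del :: real assumes r: "r > 0" and A: "A > 0"
  shows "r * A powr (-1-del) / r powr (-1-2*del) = (r^2/A) powr (1+del)"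
proof -
  have "(r^2/A) powr (1+del) = (r^2) powr (1+del) / A powr (1+del)"
    using r A by (simp add: powr_divide)
  also have "(r^2) powr (1+del) = r powr (2*(1+del))"
  proof -
    have "r^2 = r powr 2" using r by (simp add: powr_numeral)
    then show ?thesis by (simp add: powr_powr)
  qed
  also have "r powr (2*(1+del)) = r * r powr (1+2*del)"
  proof -
    have "2*(1+del) = 1 + (1+2*del)" by simp
    then have "r powr (2*(1+del)) = r powr 1 * r powr (1+2*del)" by (simp only: powr_add)
    then show ?thesis using r by simp
  qed
  finally have e: "(r^2/A) powr (1+del) = r * r powr (1+2*del) / A powr (1+del)" .
  have "A powr (-1-del) = 1 / A powr (1+del)"
    using A by (simp add: powr_minus_divide[symmetric])
  moreover have "r powr (-1-2*del) = 1 / r powr (1+2*del)"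
    using r by (simp add: powr_minus_divide[symmetric])
  ultimately show ?thesis unfolding e using r A by simp
qed

lemma powr_claim2:
  fixes a b g :: real assumes a: "a > 0" and b: "b > 0"
  shows "a powr (-1-g) / b powr (-1-g) = (b/a) powr (1+g)"
proof -
  have "a powr (-1-g) = 1 / a powr (1+g)" "b powr (-1-g) = 1 / b powr (1+g)"
    using a b by (simp_all add: powr_minus_divide[symmetric])
  then show ?thesis using a b by (simp add: powr_divide)
qed

lemma alg1:
  fixes r p1 p2 ee ss cc aa bb :: real
  assumes "r > 0" "ss > 0" "p1 > 0" "p2 > 0"
  shows "r^2/(p1*p2) * (ee/(r * ss) * (cc*(aa*bb))) = ee/ss*cc*((r*aa/p1)*(bb/p2))"
  using assms by (simp add: field_simps power2_eq_square)

lemma f1_eq: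
  assumes r: "(r::real) > 0"
  shows "f1 gam del r / Pf gam del r = integral\<^sup>L lborel (Gf gam del r)"
proof -
  define F where "F u = indicator {0<..} u * (normal_dens r u * H_dens gam del u)" for u
  have r2: "r^2 \<noteq> 0" using r by simp
  have "f1 gam del r = integral\<^sup>L lborel F"
    unfolding f1_def set_lebesgue_integral_def F_def by simp
  also have "\<dots> = \<bar>r^2\<bar> *\<^sub>R integral\<^sup>L lborel (\<lambda>t. F (0 + r^2 * t))"
    by (rule lborel_integral_real_affine[OF r2])
  finally have "f1 gam del r / Pf gam del r = integral\<^sup>L lborel (\<lambda>t. (r^2 / Pf gam del r) * F (r^2 * t))"
    by simp
  also have "\<dots> = integral\<^sup>L lborel (Gf gam del r)"
  proof (rule Bochner_Integration.integral_cong[OF refl])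
    fix t :: real
    show "(r^2 / Pf gam del r) * F (r^2 * t) = Gf gam del r t"
    proof (cases "t > 0")
      case False
      then have "\<not> r^2 * t > 0" using r by (simp add: zero_less_mult_iff)
      then show ?thesis using False by (simp add: F_def Gf_def)
    next
      case True
      have rt: "r^2 * t > 0" using r True by simp
      define A where "A = 1 + r^2*t"
      define La where "La = 1 + ln (1 + r^2*t)"
      define Lr where "Lr = 1 + ln (1 + r^2)"
      have A: "A > 0" using rt by (simp add: A_def)
      have "ln (1 + r^2*t) \<ge> 0" using rt by (intro ln_ge_zero) simp
      then have La: "La > 0" unfolding La_def by linarith
      have "ln (1 + r^2) \<ge> 0" by (intro ln_ge_zero) simp
      then have Lr: "Lr > 0" unfolding Lr_def by linarith
      have nd: "normal_dens r (r^2*t) = exp(-1/(2*t)) / (r * sqrt(2*pi*t))"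
      proof -
        have "r^2 / (2*(r^2*t)) = 1/(2*t)" using r2 by (simp add: field_simps)
        moreover have "sqrt (2*pi*(r^2*t)) = r * sqrt(2*pi*t)"
          using r by (simp add: real_sqrt_mult mult.left_commute)
        moreover have "- (r^2) / (2*(r^2*t)) = -1/(2*t)" using r2 by (simp add: field_simps)
        ultimately show ?thesis unfolding normal_dens_def by (simp only:)
      qed
      have P: "Pf gam del r = r powr (-1-2*del) * Lr powr (-1-gam)"
        using r by (simp add: Pf_def Lr_def)
      have Fv: "F (r^2*t) = exp(-1/(2*t)) / (r * sqrt(2*pi*t)) * (C_norm del gam * (A powr (-1-del) * La powr (-1-gam)))"
        unfolding F_def nd H_dens_def H_unnorm_def A_def La_def using rt by simp
      have "(r^2 / Pf gam del r) * F (r^2 * t) = exp(-1/(2*t)) / sqrt(2*pi*t) * C_norm del gam *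
           ((r * A powr (-1-del) / r powr (-1-2*del)) * (La powr (-1-gam) / Lr powr (-1-gam)))"
        unfolding Fv P by (rule alg1) (use r True Lr in auto)
      also have "\<dots> = Gf gam del r t"
        unfolding powr_claim1[OF r A] powr_claim2[OF La Lr] using True
        unfolding Gf_def A_def La_def Lr_def by simp
      finally show ?thesis .
    qed
  qed
  finally show ?thesis .
qed

lemma Gf_pos_eq: assumes i1: "indicator {0<..} t = (1::real)"
  shows "Gf gam del r t = exp(-1/(2*t)) / sqrt(2*pi*t) * C_norm del gam * ((r^2/(1+r^2*t)) powr (1+del) * ((1+ln(1+r^2))/(1+ln(1+r^2*t))) powr (1+gam))"
  unfolding Gf_def i1 by (rule mult_1_left)

lemma Dom_pos_eq: assumes i1: "indicator {0<..} t = (1::real)"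
  shows "exp(-1/(2*t)) / sqrt(2*pi*t) * C_norm del gam * ((1/t) powr (1+del) * (if t < 1 then (1/t) powr (1+gam) else 1)) = Dom gam del t"
  unfolding Dom_def i1 by (simp only: mult_1_left mult.assoc)

lemma Gf_bound:
  assumes r: "(r::real) > 0" and del: "del \<ge> 0" and gam: "gam > 0"
  shows "\<bar>Gf gam del r t\<bar> \<le> Dom gam del t"
proof (cases "t > 0")
  case False
  have i: "indicator {0<..} t = (0::real)" using False by (simp add: indicator_def)
  show ?thesis unfolding Gf_def Dom_def i by (simp only: mult_zero_left abs_zero order_refl)
next
  case True
  define E where "E = exp(-1/(2*t)) / sqrt(2*pi*t) * C_norm del gam"
  define La where "La = 1 + ln (1 + r^2*t)"
  define Lr where "Lr = 1 + ln (1 + r^2)"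
  define Z where "Z = (if t < 1 then (1/t) powr (1+gam) else 1)"
  have E: "E \<ge> 0" unfolding E_def using C_pos[OF gam del] True by simp
  have rt: "r^2 * t > 0" using r True by simp
  have "ln (1 + r^2*t) \<ge> 0" using rt by (intro ln_ge_zero) simp
  then have La: "La \<ge> 1" unfolding La_def by linarith
  have "ln (1 + r^2) \<ge> 0" by (intro ln_ge_zero) simp
  then have Lr: "Lr \<ge> 1" unfolding Lr_def by linarith
  have X: "(r^2/(1+r^2*t)) powr (1+del) \<le> (1/t) powr (1+del)"
  proof (rule powr_mono2)
    have "r^2/(1+r^2*t) \<le> r^2/(r^2*t)" using rt by (intro divide_left_mono) auto
    also have "\<dots> = 1/t" using r by simp
    finally show "r^2/(1+r^2*t) \<le> 1/t" .
  qed (use del rt in auto)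
  have Y: "(Lr/La) powr (1+gam) \<le> Z"
  proof (cases "t < 1")
    case True2: True
    have "(1+r^2*t)/t = 1/t + r^2" using True by (simp add: add_divide_distrib)
    moreover have "1/t \<ge> 1" using True True2 by simp
    ultimately have "1 + r^2 \<le> (1 + r^2*t)/t" by linarith
    then have "ln (1 + r^2) \<le> ln ((1 + r^2*t)/t)" using True rt by (subst ln_le_cancel_iff) (auto simp: add_pos_nonneg)
    also have "\<dots> = ln (1 + r^2*t) - ln t" using True rt by (simp add: ln_div)
    finally have l1: "ln (1 + r^2) \<le> ln (1 + r^2*t) - ln t" .
    have "ln (1/t) \<le> 1/t - 1" using True by (intro ln_le_minus_one) simp
    then have l2: "- ln t \<le> 1/t - 1" using True by (simp add: ln_div)
    have "1/t - 1 \<ge> 0" using True True2 by simp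
    then have "1 * (1/t - 1) \<le> La * (1/t - 1)" using La by (intro mult_right_mono) auto
    then have "(1/t - 1) \<le> La * (1/t - 1)" by (simp only: mult_1_left)
    moreover have "La * (1/t) = La + La * (1/t - 1)" by (simp add: right_diff_distrib)
    ultimately have "Lr \<le> La * (1/t)" using l1 l2 unfolding Lr_def La_def by linarith
    then have "Lr / La \<le> 1/t" using La by (subst pos_divide_le_eq) (auto simp: mult.commute)
    then have "(Lr/La) powr (1+gam) \<le> (1/t) powr (1+gam)"
      by (rule powr_mono2[rotated 2]) (use gam La Lr in auto)
    then show ?thesis using True2 by (simp add: Z_def)
  next
    case False
    then have "r^2 * 1 \<le> r^2 * t" by (intro mult_left_mono) auto
    then have "r^2 \<le> r^2 * t" by simp
    then have "ln (1 + r^2) \<le> ln (1 + r^2*t)" using rt by (subst ln_le_cancel_iff) (auto simp: add_pos_nonneg)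
    then have "Lr / La \<le> 1" using La unfolding Lr_def La_def by simp
    then have "(Lr/La) powr (1+gam) \<le> 1" using La Lr gam by (intro powr_le1) auto
    then show ?thesis using False by (simp add: Z_def)
  qed
  have i1: "indicator {0<..} t = (1::real)" using True by (simp add: indicator_def)
  have G1: "Gf gam del r t = E * ((r^2/(1+r^2*t)) powr (1+del) * (Lr/La) powr (1+gam))"
    unfolding E_def La_def Lr_def by (rule Gf_pos_eq[OF i1])
  have "Gf gam del r t \<le> E * ((1/t) powr (1+del) * Z)"
    unfolding G1 by (intro mult_left_mono[OF mult_mono[OF X Y] E]) simp_all
  also have "\<dots> = Dom gam del t"
    unfolding E_def Z_def by (rule Dom_pos_eq[OF i1])
  finally have "Gf gam del r t \<le> Dom gam del t" .
  moreover have "Gf gam del r t \<ge> 0"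
    unfolding G1 by (intro mult_nonneg_nonneg E) simp_all
  ultimately show ?thesis by (metis abs_of_nonneg)
qed

lemma Gf_meas: "Gf gam del r \<in> borel_measurable lborel"
  unfolding Gf_def by measurable

lemma Dlim_meas: "Dlim gam del \<in> borel_measurable lborel"
  unfolding Dlim_def by measurable

lemma Dom_meas: "Dom gam del \<in> borel_measurable lborel"
  unfolding Dom_def by measurable

lemma pow32_int: "integrable lborel (\<lambda>u::real. indicator {1..} u * u powr (-3/2))"
proof -
  have "(\<lambda>x::real. x powr (-3/2)) integrable_on {1..}"
    using has_integral_powr_to_inf[of "-3/2" 1] by (auto simp: integrable_on_def)
  then have "(\<lambda>x::real. x powr (-3/2)) absolutely_integrable_on {1..}"
    by (rule nonnegative_absolutely_integrable_1) auto
  then have "integrable lebesgue (\<lambda>u::real. indicator {1..} u * u powr (-3/2))"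
    by (simp add: set_integrable_def)
  moreover have "(\<lambda>u::real. indicator {1..} u * u powr (-3/2)) \<in> borel_measurable lborel"
    by measurable
  ultimately show ?thesis using integrable_completion by blast
qed

lemma small_bound:
  fixes q :: real
  obtains M where "M > 0" "\<And>t. 0 < t \<Longrightarrow> t < 1 \<Longrightarrow> exp(-1/(2*t)) * t powr (-q) \<le> M"
proof -
  have "((\<lambda>t. exp(-1/(2*t)) * t powr (-q)) \<longlongrightarrow> 0) (at_right 0)"
    by real_asymp
  then have "eventually (\<lambda>t. exp(-1/(2*t)) * t powr (-q) < 1) (at_right 0)"
    by (rule order_tendstoD) simp
  then obtain b where b: "b > 0" "\<And>t. t > 0 \<Longrightarrow> t < b \<Longrightarrow> exp(-1/(2*t)) * t powr (-q) < 1"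
    unfolding eventually_at_right_field by auto
  show ?thesis
  proof (rule that[of "2 + b powr (-q)"])
    show "0 < 2 + b powr (-q)" by (simp add: add_pos_nonneg)
    fix t :: real assume t: "0 < t" "t < 1"
    show "exp(-1/(2*t)) * t powr (-q) \<le> 2 + b powr (-q)"
    proof (cases "t < b")
      case True
      then show ?thesis using b(2)[OF t(1) True] by (smt (verit) powr_ge_zero)
    next
      case False
      have e: "exp(-1/(2*t)) \<le> 1" using t by simp
      have "t powr (-q) \<le> 1 + b powr (-q)"
      proof (cases "-q \<le> 0")
        case True
        have "t powr (-q) \<le> b powr (-q)" using False b True by (intro powr_mono2') auto
        then show ?thesis by simp
      next
        case False2: False
        have "t powr (-q) \<le> 1 powr (-q)" using False2 t by (intro powr_mono2) auto
        then show ?thesis by (smt (verit) powr_ge_zero powr_one_eq_one)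
      qed
      moreover have "t powr (-q) \<ge> 0" by simp
      ultimately have "exp(-1/(2*t)) * t powr (-q) \<le> 1 * (1 + b powr (-q))"
        using e by (intro mult_mono) auto
      then show ?thesis by simp
    qed
  qed
qed

lemma one_over_powr: "(t::real) > 0 \<Longrightarrow> (1/t) powr a = t powr (-a)"
  by (simp add: powr_divide powr_minus_divide)

lemma Dom_int:
  assumes gam: "(gam::real) > 0" and del: "del \<ge> 0"
  shows "integrable lborel (Dom gam del)"
proof -
  define q where "q = 5/2 + del + gam"
  define C where "C = C_norm del gam"
  have C: "C > 0" unfolding C_def by (rule C_pos[OF gam del])
  obtain M where M: "M > 0" "\<And>t. 0 < t \<Longrightarrow> t < 1 \<Longrightarrow> exp(-1/(2*t)) * t powr (-q) \<le> M"
    using small_bound[of q] by blast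
  show ?thesis
  proof (rule Bochner_Integration.integrable_bound)
    show "integrable lborel (\<lambda>t. C * M * indicator {0<..<1} t + C * (indicator {1..} t * t powr (-3/2)))"
      using pow32_int by (intro Bochner_Integration.integrable_add) auto
    show "Dom gam del \<in> borel_measurable lborel" by (rule Dom_meas)
    show "AE t in lborel. norm (Dom gam del t) \<le> norm (C * M * indicator {0<..<1} t + C * (indicator {1..} t * t powr (-3/2)))"
    proof (rule AE_I2)
      fix t :: real
      have nd: "1 / sqrt (2*pi*t) \<le> t powr (-1/2)" if "t > 0"
        using nd0_le[OF that] by (simp add: normal_dens_def)
      have ex: "exp(-1/(2*t)) \<le> 1" if "t > 0" using that by simp
      have Dnn: "Dom gam del t \<ge> 0"
        unfolding Dom_def using C C_def by (auto simp: indicator_def)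
      consider "t \<le> 0" | "0 < t" "t < 1" | "t \<ge> 1" by linarith
      then show "norm (Dom gam del t) \<le> norm (C * M * indicator {0<..<1} t + C * (indicator {1..} t * t powr (-3/2)))"
      proof cases
        case 1
        then show ?thesis by (simp add: Dom_def)
      next
        case 2
        have "Dom gam del t = C * (exp(-1/(2*t)) * (1/sqrt(2*pi*t)) * (t powr (-(1+del)) * t powr (-(1+gam))))"
          using 2 by (simp add: Dom_def C_def one_over_powr)
        also have "\<dots> \<le> C * (exp(-1/(2*t)) * t powr (-1/2) * (t powr (-(1+del)) * t powr (-(1+gam))))"
          using 2 C nd by (intro mult_left_mono mult_right_mono) auto
        also have "t powr (-1/2) * (t powr (-(1+del)) * t powr (-(1+gam))) = t powr (-q)"
        proof -
          have "t powr (-1/2) * (t powr (-(1+del)) * t powr (-(1+gam))) = t powr (-1/2 + (-(1+del) + -(1+gam)))"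
            by (simp only: powr_add)
          moreover have "-1/2 + (-(1+del) + -(1+gam)) = -q" unfolding q_def by linarith
          ultimately show ?thesis by simp
        qed
        then have "C * (exp(-1/(2*t)) * t powr (-1/2) * (t powr (-(1+del)) * t powr (-(1+gam)))) = C * (exp(-1/(2*t)) * t powr (-q))"
          by (simp add: mult.assoc)
        also have "\<dots> \<le> C * M" using M(2)[OF 2] C by simp
        finally show ?thesis using 2 Dnn C M by simp
      next
        case 3
        have "Dom gam del t = C * (exp(-1/(2*t)) * (1/sqrt(2*pi*t)) * (1/t) powr (1+del))"
          using 3 by (simp add: Dom_def C_def)
        also have "\<dots> \<le> C * (1 * t powr (-1/2) * (1/t))"
        proof -
          have b: "(1/t) powr (1+del) \<le> 1/t" using 3 del by (intro powr_le_one_le) auto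
          have a: "exp(-1/(2*t)) * (1/sqrt(2*pi*t)) \<le> 1 * t powr (-1/2)"
            using 3 nd ex by (intro mult_mono) auto
          show ?thesis using C 3
            by (intro mult_left_mono[OF mult_mono[OF a b]]) auto
        qed
        also have "t powr (-1/2) * (1/t) = t powr (-3/2)"
        proof -
          have "1/t = t powr (-1)" using 3 by (simp add: powr_minus_divide)
          then have "t powr (-1/2) * (1/t) = t powr (-1/2 + -1)" by (simp only: powr_add)
          then show ?thesis by simp
        qed
        then have "C * (1 * t powr (-1/2) * (1/t)) = C * t powr (-3/2)" by simp
        finally show ?thesis using 3 Dnn C by simp
      qed
    qed
  qed
qed

lemma Dlim_nonneg: "(gam::real) > 0 \<Longrightarrow> del \<ge> 0 \<Longrightarrow> Dlim gam del t \<ge> 0"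
  using C_pos[of gam del] unfolding Dlim_def by (auto simp: indicator_def)

lemma Dlim_pos: "(gam::real) > 0 \<Longrightarrow> del \<ge> 0 \<Longrightarrow> t > 0 \<Longrightarrow> Dlim gam del t > 0"
  using C_pos[of gam del] unfolding Dlim_def by (auto simp: indicator_def)

lemma Dlim_le_Dom:
  assumes gam: "(gam::real) > 0" and del: "del \<ge> 0"
  shows "Dlim gam del t \<le> Dom gam del t"
proof (cases "t > 0")
  case True
  have Z: "1 \<le> (if t < 1 then (1/t) powr (1+gam) else 1)"
    using True gam by (auto intro!: ge_one_powr_ge_zero)
  have "Dlim gam del t * 1 \<le> Dlim gam del t * (if t < 1 then (1/t) powr (1+gam) else 1)"
    using Dlim_nonneg[OF gam del] Z by (intro mult_left_mono) auto
  also have "\<dots> = Dom gam del t" unfolding Dlim_def Dom_def by (simp only: mult.assoc)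
  finally show ?thesis by simp
qed (simp add: Dlim_def Dom_def)

lemma Dlim_int:
  assumes gam: "(gam::real) > 0" and del: "del \<ge> 0"
  shows "integrable lborel (Dlim gam del)"
proof (rule Bochner_Integration.integrable_bound[OF Dom_int[OF gam del] Dlim_meas])
  show "AE x in lborel. norm (Dlim gam del x) \<le> norm (Dom gam del x)"
    using Dlim_nonneg[OF gam del] Dlim_le_Dom[OF gam del] by (intro AE_I2) (smt (verit, best) real_norm_def)
qed

lemma K_pos:
  assumes gam: "(gam::real) > 0" and del: "del \<ge> 0"
  shows "integral\<^sup>L lborel (Dlim gam del) > 0"
  by (rule pos_integral[OF Dlim_int[OF gam del] Dlim_nonneg[OF gam del] Dlim_pos[OF gam del]])

lemma f1_asym:
  assumes gam: "(gam::real) > 0" and del: "del \<ge> 0"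
  shows "((\<lambda>r. f1 gam del r / Pf gam del r) \<longlongrightarrow> integral\<^sup>L lborel (Dlim gam del)) at_top"
proof -
  have lim: "((\<lambda>r. integral\<^sup>L lborel (Gf gam del r)) \<longlongrightarrow> integral\<^sup>L lborel (Dlim gam del)) at_top"
  proof (rule integral_dominated_convergence_at_top[where s="Gf gam del" and w="Dom gam del" and f="Dlim gam del" and M=lborel])
    show "Dlim gam del \<in> borel_measurable lborel" by (rule Dlim_meas)
    show "\<And>r. Gf gam del r \<in> borel_measurable lborel" by (rule Gf_meas)
    show "integrable lborel (Dom gam del)" by (rule Dom_int[OF gam del])
    show "AE t in lborel. ((\<lambda>r. Gf gam del r t) \<longlongrightarrow> Dlim gam del t) at_top"
    proof (rule AE_I2)
      fix t :: real
      show "((\<lambda>r. Gf gam del r t) \<longlongrightarrow> Dlim gam del t) at_top"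
      proof (cases "t > 0")
        case True
        then show ?thesis by (rule Gf_lim)
      next
        case False
        have i: "indicator {0<..} t = (0::real)" using False by (simp add: indicator_def)
        show ?thesis unfolding Gf_def Dlim_def i by (simp only: mult_zero_left tendsto_const)
      qed
    qed
    show "\<forall>\<^sub>F r in at_top. AE t in lborel. norm (Gf gam del r t) \<le> Dom gam del t"
      using eventually_gt_at_top[of "0::real"]
      by eventually_elim (use Gf_bound del gam in auto)
  qed
  have "\<forall>\<^sub>F r in at_top. integral\<^sup>L lborel (Gf gam del r) = f1 gam del r / Pf gam del r"
    using eventually_gt_at_top[of "0::real"] by eventually_elim (simp add: f1_eq)
  from tendsto_cong[OF this] lim show ?thesis by simp
qed

lemma f0_Pf_eq: "(r::real) > 0 \<Longrightarrow> exp (- (r^2) / (2 * 1)) / sqrt (2 * pi * 1) / (r powr (-1-2*del) * (1+ln(1+r^2)) powr (-1-gam)) = f0 r / Pf gam del r"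
  unfolding f0_def normal_dens_def Pf_def by simp

lemma f0_asym:
  shows "((\<lambda>r. f0 r / Pf gam del r) \<longlongrightarrow> 0) at_top"
proof -
  have lim: "((\<lambda>r. exp (- (r^2) / (2 * 1)) / sqrt (2 * pi * 1) / (r powr (-1-2*del) * (1+ln(1+r^2)) powr (-1-gam))) \<longlongrightarrow> 0) at_top"
    by real_asymp
  have eq: "\<forall>\<^sub>F r in at_top. exp (- (r^2) / (2 * 1)) / sqrt (2 * pi * 1) / (r powr (-1-2*del) * (1+ln(1+r^2)) powr (-1-gam)) = f0 r / Pf gam del r"
    by (rule eventually_mono[OF eventually_gt_at_top[of "0::real"]]) (rule f0_Pf_eq)
  from tendsto_cong[OF eq] lim show ?thesis by simp
qed

lemma h_asym:
  assumes gam: "(gam::real) > 0" and del: "del \<ge> 0"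
  shows "((\<lambda>r. fmix s gam del r / Pf gam del r) \<longlongrightarrow> s * integral\<^sup>L lborel (Dlim gam del)) at_top"
proof -
  have "((\<lambda>r. (1-s) * (f0 r / Pf gam del r) + s * (f1 gam del r / Pf gam del r)) \<longlongrightarrow> (1-s) * 0 + s * integral\<^sup>L lborel (Dlim gam del)) at_top"
    by (intro tendsto_intros f0_asym f1_asym gam del)
  then show ?thesis by (simp add: fmix_def add_divide_distrib)
qed

lemma fmix_abs: "fmix s gam del \<bar>w\<bar> = fmix s gam del w"
  by (simp add: fmix_def f0_def f1_def normal_dens_def)

lemma Pf_pos: "w \<noteq> 0 \<Longrightarrow> Pf gam del w > 0"
proof -
  assume w: "w \<noteq> 0"
  have "ln (1 + w^2) \<ge> 0" by (intro ln_ge_zero) simp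
  then have "1 + ln (1 + w^2) \<noteq> 0" by linarith
  then show ?thesis using w by (simp add: Pf_def)
qed

lemma fm_decomp:
  assumes w: "(w::real) \<noteq> 0"
  shows "fmix s gam del w = Pf gam del w * (fmix s gam del \<bar>w\<bar> / Pf gam del \<bar>w\<bar>)"
proof -
  have "Pf gam del \<bar>w\<bar> = Pf gam del w" by (simp add: Pf_def)
  then show ?thesis using Pf_pos[OF w, of gam del] by (simp add: fmix_abs)
qed

lemma alg2:
  fixes sg X Y Lt Lz H1 H2 P :: real
  assumes "sg > 0" "Y \<noteq> 0" "Lz \<noteq> 0" "H2 \<noteq> 0" "P > 0"
  shows "(1/sg) * (X / (1/(sg*P)) * Lt * H1) / (Y * Lz * H2) / P = (X / Y) * (Lt/Lz) * (H1/H2)"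
  using assms by (simp add: field_simps)

lemma R_alg:
  fixes fm hh :: "real \<Rightarrow> real" and sg z a :: real
  assumes fmeq: "\<And>w. w \<noteq> 0 \<Longrightarrow> fm w = Pf gam del w * hh \<bar>w\<bar>"
    and hz: "hh \<bar>z\<bar> \<noteq> 0" and sg: "sg > 0" and z: "z \<noteq> 0" and za: "z - a \<noteq> 0"
  shows "(1/sg) * fm ((z-a)/sg) / fm z / sg powr (2*del)
     = (\<bar>z-a\<bar>/\<bar>z\<bar>) powr (-1-2*del) * ((1+ln(1+z^2))/(1+ln(1+((z-a)/sg)^2))) powr (1+gam) * (hh \<bar>(z-a)/sg\<bar> / hh \<bar>z\<bar>)"
proof -
  define t where "t = (z-a)/sg"
  have t: "t \<noteq> 0" using za sg by (simp add: t_def)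
  define e where "e = -1-2*del"
  define Lt where "Lt = (1+ln(1+t^2)) powr (-1-gam)"
  define Lz where "Lz = (1+ln(1+z^2)) powr (-1-gam)"
  have "ln(1+t^2) \<ge> 0" by (intro ln_ge_zero) simp
  then have lt0: "1+ln(1+t^2) > 0" by linarith
  have "ln(1+z^2) \<ge> 0" by (intro ln_ge_zero) simp
  then have lz0: "1+ln(1+z^2) > 0" by linarith
  have Lz: "Lz \<noteq> 0" using lz0 by (simp add: Lz_def)
  have abst: "\<bar>t\<bar> = \<bar>z-a\<bar>/sg" using sg by (simp add: t_def)
  have Pt: "Pf gam del t = \<bar>z-a\<bar> powr e / sg powr e * Lt"
    unfolding Pf_def Lt_def e_def abst using sg by (simp add: powr_divide)
  have Pz: "Pf gam del z = \<bar>z\<bar> powr e * Lz" unfolding Pf_def Lz_def e_def by simp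
  have k: "sg powr e = 1/(sg * sg powr (2*del))"
  proof -
    have "sg powr (1 + 2*del) = sg * sg powr (2*del)" using sg by (simp add: powr_add)
    then show ?thesis unfolding e_def using sg
      by (metis minus_diff_eq powr_minus_divide add.commute diff_minus_eq_add uminus_add_conv_diff)
  qed
  have "(1/sg) * fm t / fm z / sg powr (2*del)
      = (1/sg) * (\<bar>z-a\<bar> powr e / (1/(sg * sg powr (2*del))) * Lt * hh \<bar>t\<bar>) / (\<bar>z\<bar> powr e * Lz * hh \<bar>z\<bar>) / sg powr (2*del)"
    unfolding fmeq[OF t] fmeq[OF z] Pt Pz k by (simp only: mult.assoc)
  also have "\<dots> = (\<bar>z-a\<bar> powr e / \<bar>z\<bar> powr e) * (Lt/Lz) * (hh \<bar>t\<bar> / hh \<bar>z\<bar>)"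
    by (rule alg2) (use sg z Lz hz in auto)
  also have "\<bar>z-a\<bar> powr e / \<bar>z\<bar> powr e = (\<bar>z-a\<bar>/\<bar>z\<bar>) powr e" by (simp add: powr_divide)
  also have "Lt / Lz = ((1+ln(1+z^2))/(1+ln(1+t^2))) powr (1+gam)"
    unfolding Lt_def Lz_def by (rule powr_claim2[OF lt0 lz0])
  finally show ?thesis unfolding t_def e_def .
qed

lemma ratio_lim:
  fixes F :: "'a filter" and z a sg :: "'a \<Rightarrow> real" and A s0 s1 gam del s :: real
  assumes gam: "gam > 0" and del: "del \<ge> 0" and s: "0 < s" "s \<le> 1"
    and zlim: "filterlim (\<lambda>x. \<bar>z x\<bar>) at_top F"
    and bnd: "eventually (\<lambda>x. \<bar>a x\<bar> \<le> A \<and> s0 \<le> sg x \<and> sg x \<le> s1) F"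
    and s0: "s0 > 0" and s01: "s0 \<le> s1" and A: "A \<ge> 0"
  shows "((\<lambda>x. (1 / sg x) * fmix s gam del ((z x - a x) / sg x) / fmix s gam del (z x) / sg x powr (2 * del)) \<longlongrightarrow> 1) F"
proof -
  define fm where "fm = fmix s gam del"
  define hh where "hh r = fm r / Pf gam del r" for r
  define L0 where "L0 = s * integral\<^sup>L lborel (Dlim gam del)"
  have L0: "L0 > 0" using K_pos[OF gam del] s by (simp add: L0_def)
  have hlim: "(hh \<longlongrightarrow> L0) at_top" unfolding hh_def fm_def L0_def by (rule h_asym[OF gam del])
  have fmeq: "\<And>w. w \<noteq> 0 \<Longrightarrow> fm w = Pf gam del w * hh \<bar>w\<bar>" unfolding fm_def hh_def by (rule fm_decomp)
  have s1: "s1 > 0" using s0 s01 by linarith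
  define t where "t x = (z x - a x) / sg x" for x
  define Q where "Q x = (\<bar>a x\<bar> \<le> A \<and> s0 \<le> sg x \<and> sg x \<le> s1 \<and> 2 * A + 1 \<le> \<bar>z x\<bar>)" for x
  have ev: "eventually Q F"
    using eventually_conj[OF bnd zlim[unfolded filterlim_at_top, rule_format, of "2 * A + 1"]]
    by (rule eventually_mono) (auto simp: Q_def)
  have P: "z x \<noteq> 0 \<and> z x - a x \<noteq> 0 \<and> sg x > 0 \<and> \<bar>z x\<bar> / 2 \<le> \<bar>z x - a x\<bar> \<and> \<bar>z x - a x\<bar> \<le> 2 * \<bar>z x\<bar>
      \<and> \<bar>a x\<bar> \<le> A \<and> s0 \<le> sg x \<and> sg x \<le> s1" if "Q x" for x
  proof -
    have q: "\<bar>a x\<bar> \<le> A" "s0 \<le> sg x" "sg x \<le> s1" "2 * A + 1 \<le> \<bar>z x\<bar>" using that unfolding Q_def by auto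
    have "\<bar>z x\<bar> - \<bar>a x\<bar> \<le> \<bar>z x - a x\<bar>" by (rule abs_triangle_ineq2)
    moreover have "\<bar>z x - a x\<bar> \<le> \<bar>z x\<bar> + \<bar>a x\<bar>" by (rule abs_triangle_ineq4)
    ultimately show ?thesis using q s0 A by auto
  qed
  have tlim: "filterlim (\<lambda>x. \<bar>t x\<bar>) at_top F"
  proof (rule filterlim_at_top_mono)
    show "filterlim (\<lambda>x. (1 / (2 * s1)) * \<bar>z x\<bar>) at_top F"
      by (rule filterlim_tendsto_pos_mult_at_top[OF tendsto_const _ zlim]) (use s1 in simp)
    show "eventually (\<lambda>x. (1 / (2 * s1)) * \<bar>z x\<bar> \<le> \<bar>t x\<bar>) F"
      using ev
    proof eventually_elim
      case (elim x)
      note p = P[OF elim]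
      have "(\<bar>z x\<bar> / 2) / s1 \<le> \<bar>z x - a x\<bar> / sg x"
        by (rule frac_le) (use p in auto)
      moreover have "\<bar>t x\<bar> = \<bar>z x - a x\<bar> / sg x" using p by (simp add: t_def)
      ultimately show ?case by simp
    qed
  qed
  have Hlim: "((\<lambda>x. hh \<bar>t x\<bar> / hh \<bar>z x\<bar>) \<longlongrightarrow> 1) F"
  proof -
    have "((\<lambda>x. hh \<bar>t x\<bar> / hh \<bar>z x\<bar>) \<longlongrightarrow> L0 / L0) F"
      by (rule tendsto_divide[OF filterlim_compose[OF hlim tlim] filterlim_compose[OF hlim zlim]]) (use L0 in simp)
    then show ?thesis using L0 by simp
  qed
  have Clim: "((\<lambda>x. (\<bar>z x - a x\<bar> / \<bar>z x\<bar>) powr (-1 - 2 * del)) \<longlongrightarrow> 1) F"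
  proof -
    have az: "((\<lambda>x. a x / z x) \<longlongrightarrow> 0) F"
    proof (rule tendsto_0_le[OF tendsto_inverse_0_at_top[OF zlim], of _ A])
      show "eventually (\<lambda>x. norm (a x / z x) \<le> norm (inverse \<bar>z x\<bar>) * A) F"
        using ev
      proof eventually_elim
        case (elim x)
        note p = P[OF elim]
        have "\<bar>a x\<bar> / \<bar>z x\<bar> \<le> A / \<bar>z x\<bar>" using p by (intro divide_right_mono) auto
        moreover have "norm (a x / z x) = \<bar>a x\<bar> / \<bar>z x\<bar>" by (simp add: abs_divide)
        moreover have "norm (inverse \<bar>z x\<bar>) * A = A / \<bar>z x\<bar>" by (simp add: divide_inverse)
        ultimately show ?case by simp
      qed
    qed
    have "((\<lambda>x. \<bar>1 - a x / z x\<bar>) \<longlongrightarrow> \<bar>1 - 0\<bar>) F" by (intro tendsto_intros az)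
    moreover have "eventually (\<lambda>x. \<bar>1 - a x / z x\<bar> = \<bar>z x - a x\<bar> / \<bar>z x\<bar>) F"
      using ev
    proof eventually_elim
      case (elim x)
      note p = P[OF elim]
      have "1 - a x / z x = (z x - a x) / z x" using p by (simp add: diff_divide_distrib)
      then show ?case by (simp add: abs_divide)
    qed
    ultimately have "((\<lambda>x. \<bar>z x - a x\<bar> / \<bar>z x\<bar>) \<longlongrightarrow> 1) F"
      using tendsto_cong by fastforce
    from tendsto_powr[OF this tendsto_const[of "-1 - 2 * del"]] show ?thesis by simp
  qed
  define c where "c = 1 / (4 * s1^2)"
  define C where "C = 4 / s0^2"
  have c: "c > 0" using s1 by (simp add: c_def)
  have C: "C > 0" using s0 by (simp add: C_def)
  have r1: "((\<lambda>r. (1 + ln (1 + c * r^2)) / (1 + ln (1 + r^2))) \<longlongrightarrow> 1) at_top"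
    using c by real_asymp
  have r2: "((\<lambda>r. (1 + ln (1 + C * r^2)) / (1 + ln (1 + r^2))) \<longlongrightarrow> 1) at_top"
    using C by real_asymp
  have Dlim': "((\<lambda>x. ((1 + ln (1 + (z x)^2)) / (1 + ln (1 + (t x)^2))) powr (1 + gam)) \<longlongrightarrow> 1) F"
  proof -
    have l1: "((\<lambda>x. (1 + ln (1 + c * (z x)^2)) / (1 + ln (1 + (z x)^2))) \<longlongrightarrow> 1) F"
      using filterlim_compose[OF r1 zlim] by simp
    have l2: "((\<lambda>x. (1 + ln (1 + C * (z x)^2)) / (1 + ln (1 + (z x)^2))) \<longlongrightarrow> 1) F"
      using filterlim_compose[OF r2 zlim] by simp
    have phi_mono: "(1 + ln (1 + u1)) / (1 + ln (1 + w^2)) \<le> (1 + ln (1 + u2)) / (1 + ln (1 + w^2))"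
      if "0 \<le> u1" "u1 \<le> u2" for u1 u2 w :: real
    proof -
      have "ln (1 + w^2) \<ge> 0" by (intro ln_ge_zero) simp
      then have "1 + ln (1 + w^2) > 0" by linarith
      moreover have "ln (1 + u1) \<le> ln (1 + u2)" using that by (subst ln_le_cancel_iff) auto
      ultimately show ?thesis by (intro divide_right_mono) auto
    qed
    have bounds: "c * (z x)^2 \<le> (t x)^2 \<and> (t x)^2 \<le> C * (z x)^2" if "Q x" for x
    proof -
      note p = P[OF that]
      have t2: "(t x)^2 = (z x - a x)^2 / (sg x)^2" by (simp add: t_def power_divide)
      have a1: "(\<bar>z x\<bar> / 2)^2 \<le> \<bar>z x - a x\<bar>^2" using p by (intro power_mono) auto
      have a2: "\<bar>z x - a x\<bar>^2 \<le> (2 * \<bar>z x\<bar>)^2" using p by (intro power_mono) auto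
      have b1: "(sg x)^2 \<le> s1^2" using p by (intro power_mono) auto
      have b2: "s0^2 \<le> (sg x)^2" using p s0 by (intro power_mono) auto
      have "c * (z x)^2 = ((\<bar>z x\<bar> / 2)^2) / s1^2" unfolding c_def by (simp add: power_divide field_simps)
      also have "\<dots> \<le> \<bar>z x - a x\<bar>^2 / (sg x)^2"
        by (rule frac_le) (use a1 b1 p in auto)
      also have "\<dots> = (t x)^2" using t2 by simp
      finally have lo: "c * (z x)^2 \<le> (t x)^2" .
      have "(t x)^2 = \<bar>z x - a x\<bar>^2 / (sg x)^2" using t2 by simp
      also have "\<dots> \<le> (2 * \<bar>z x\<bar>)^2 / s0^2"
        by (rule frac_le) (use a2 b2 p s0 in auto)
      also have "\<dots> = C * (z x)^2" unfolding C_def by (simp add: power_mult_distrib)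
      finally show ?thesis using lo by simp
    qed
    have "((\<lambda>x. (1 + ln (1 + (t x)^2)) / (1 + ln (1 + (z x)^2))) \<longlongrightarrow> 1) F"
    proof (rule tendsto_sandwich[OF _ _ l1 l2])
      show "eventually (\<lambda>x. (1 + ln (1 + c * (z x)^2)) / (1 + ln (1 + (z x)^2)) \<le> (1 + ln (1 + (t x)^2)) / (1 + ln (1 + (z x)^2))) F"
        using ev by eventually_elim (use bounds c in \<open>auto intro!: phi_mono\<close>)
      show "eventually (\<lambda>x. (1 + ln (1 + (t x)^2)) / (1 + ln (1 + (z x)^2)) \<le> (1 + ln (1 + C * (z x)^2)) / (1 + ln (1 + (z x)^2))) F"
        using ev by eventually_elim (use bounds in \<open>auto intro!: phi_mono\<close>)
    qed
    from tendsto_inverse[OF this] have "((\<lambda>x. (1 + ln (1 + (z x)^2)) / (1 + ln (1 + (t x)^2))) \<longlongrightarrow> 1) F"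
      by (simp add: inverse_divide)
    from tendsto_powr[OF this tendsto_const[of "1 + gam"]] show ?thesis by simp
  qed
  have eq: "eventually (\<lambda>x. (\<bar>z x - a x\<bar> / \<bar>z x\<bar>) powr (-1 - 2 * del) * ((1 + ln (1 + (z x)^2)) / (1 + ln (1 + (t x)^2))) powr (1 + gam) * (hh \<bar>t x\<bar> / hh \<bar>z x\<bar>)
      = (1 / sg x) * fmix s gam del ((z x - a x) / sg x) / fmix s gam del (z x) / sg x powr (2 * del)) F"
    using ev
  proof eventually_elim
    case (elim x)
    note p = P[OF elim]
    have hz: "hh \<bar>z x\<bar> \<noteq> 0"
      using fmix_pos[OF gam del s, of "\<bar>z x\<bar>"] Pf_pos[of "\<bar>z x\<bar>" gam del] p
      by (simp add: hh_def fm_def)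
    have R: "(1 / sg x) * fm ((z x - a x) / sg x) / fm (z x) / sg x powr (2 * del)
      = (\<bar>z x - a x\<bar> / \<bar>z x\<bar>) powr (-1 - 2 * del) * ((1 + ln (1 + (z x)^2)) / (1 + ln (1 + ((z x - a x) / sg x)^2))) powr (1 + gam) * (hh \<bar>(z x - a x) / sg x\<bar> / hh \<bar>z x\<bar>)"
      by (rule R_alg[where fm=fm and hh=hh and gam=gam and del=del, OF fmeq hz]) (use p in auto)
    show ?case unfolding t_def using R unfolding fm_def by (rule sym)
  qed
  have "((\<lambda>x. (\<bar>z x - a x\<bar> / \<bar>z x\<bar>) powr (-1 - 2 * del) * ((1 + ln (1 + (z x)^2)) / (1 + ln (1 + (t x)^2))) powr (1 + gam) * (hh \<bar>t x\<bar> / hh \<bar>z x\<bar>)) \<longlongrightarrow> 1 * 1 * 1) F"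
    by (intro tendsto_mult Clim Dlim' Hlim)
  then show ?thesis using tendsto_cong[OF eq] by simp
qed

lemma upost_ratio:
  fixes x :: "nat \<Rightarrow> real^'p" and yy :: "nat \<Rightarrow> real" and f :: "real \<Rightarrow> real"
    and prior :: "real^'p \<Rightarrow> real \<Rightarrow> real" and del \<sigma> :: real
  assumes sig: "\<sigma> > 0" and fpos: "\<And>w. f w > 0" and pr: "prior \<beta> \<sigma> > 0"
    and part: "KI \<union> LI = {1..n}" "KI \<inter> LI = {}"
  shows "upost TYPE('p) f prior x yy {1..n} \<beta> \<sigma> / upost TYPE('p) f prior x yy KI \<beta> \<sigma> / (\<Prod>i\<in>LI. f (yy i))
     = \<sigma> powr (2 * real (card LI) * del) * (\<Prod>i\<in>LI. (1 / \<sigma>) * f ((yy i - x i \<bullet> \<beta>) / \<sigma>) / f (yy i) / \<sigma> powr (2 * del))"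
proof -
  define g where "g i = (1 / \<sigma>) * f ((yy i - x i \<bullet> \<beta>) / \<sigma>)" for i
  have gpos: "g i > 0" for i using sig fpos by (simp add: g_def)
  have fin: "finite KI" "finite LI" using part(1) by (metis finite_Un finite_atLeastAtMost)+
  have "upost TYPE('p) f prior x yy {1..n} \<beta> \<sigma> = prior \<beta> \<sigma> * ((\<Prod>i\<in>KI. g i) * (\<Prod>i\<in>LI. g i))"
    unfolding upost_def g_def[symmetric] part(1)[symmetric] by (simp add: prod.union_disjoint[OF fin part(2)])
  moreover have "upost TYPE('p) f prior x yy KI \<beta> \<sigma> = prior \<beta> \<sigma> * (\<Prod>i\<in>KI. g i)"
    unfolding upost_def g_def[symmetric] by simp
  moreover have "(\<Prod>i\<in>KI. g i) > 0" using gpos by (simp add: prod_pos)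
  ultimately have r1: "upost TYPE('p) f prior x yy {1..n} \<beta> \<sigma> / upost TYPE('p) f prior x yy KI \<beta> \<sigma> = (\<Prod>i\<in>LI. g i)"
    using pr by simp
  have sp: "\<sigma> powr (2 * del) > 0" using sig by simp
  have "(\<Prod>i\<in>LI. g i / f (yy i) / \<sigma> powr (2 * del)) = (\<Prod>i\<in>LI. g i / f (yy i)) / (\<Prod>i\<in>LI. \<sigma> powr (2 * del))"
    by (rule prod_dividef)
  also have "(\<Prod>i\<in>LI. \<sigma> powr (2 * del)) = (\<sigma> powr (2 * del)) ^ card LI" by (rule prod_constant)
  also have "(\<sigma> powr (2 * del)) ^ card LI = \<sigma> powr (2 * real (card LI) * del)"
    using sig by (simp add: powr_power mult.commute mult.left_commute)
  finally have "\<sigma> powr (2 * real (card LI) * del) * (\<Prod>i\<in>LI. g i / f (yy i) / \<sigma> powr (2 * del)) = (\<Prod>i\<in>LI. g i / f (yy i))"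
    using sig by simp
  also have "\<dots> = (\<Prod>i\<in>LI. g i) / (\<Prod>i\<in>LI. f (yy i))" by (simp add: prod_dividef)
  finally show ?thesis unfolding r1 g_def by simp
qed

theorem theoremS1:
  fixes gam del s :: real and n :: nat
    and KI LI :: "nat set"
    and x :: "nat \<Rightarrow> real^'p"
    and prior :: "real^'p \<Rightarrow> real \<Rightarrow> real"
    and y :: "real \<Rightarrow> nat \<Rightarrow> real"
    and Kc :: "((real^'p) \<times> real) set"
  assumes gam: "gam > 0" and del: "del \<ge> 0" and s: "0 < s" "s \<le> 1"
    and prior_pos: "\<And>\<beta> \<sigma>. \<sigma> > 0 \<Longrightarrow> prior \<beta> \<sigma> > 0"
    and part: "KI \<union> LI = {1..n}" "KI \<inter> LI = {}"
    and constK: "\<And>i. i \<in> KI \<Longrightarrow> \<exists>c. \<forall>\<omega>. y \<omega> i = c"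
    and divL: "\<And>i. i \<in> LI \<Longrightarrow> filterlim (\<lambda>\<omega>. \<bar>y \<omega> i\<bar>) at_top at_top"
    and Kc: "compact Kc" "Kc \<subseteq> UNIV \<times> {0<..}"
  shows "uniform_limit Kc
     (\<lambda>\<omega> (\<beta>, \<sigma>).
        (upost TYPE('p) (fmix s gam del) prior x (y \<omega>) {1..n} \<beta> \<sigma>
          / upost TYPE('p) (fmix s gam del) prior x (y \<omega>) KI \<beta> \<sigma>)
        / (\<Prod>i\<in>LI. fmix s gam del (y \<omega> i)))
     (\<lambda>(\<beta>, \<sigma>). \<sigma> powr (2 * real (card LI) * del))
     at_top"
proof (cases "Kc = {}")
  case True
  then show ?thesis by (simp add: uniform_limit_iff)
next
  case False
  define fm where "fm = fmix s gam del"
  have fpos: "\<And>w. fm w > 0" unfolding fm_def by (rule fmix_pos[OF gam del s])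
  have cs: "compact (snd ` Kc)" by (rule compact_continuous_image[OF continuous_on_snd[OF continuous_on_id] Kc(1)])
  obtain s0 where s0K: "s0 \<in> snd ` Kc" and s0le: "\<forall>u\<in>snd ` Kc. s0 \<le> u"
    using compact_attains_inf[OF cs] False by blast
  have s0: "s0 > 0" using s0K Kc(2) by auto
  obtain s1 where s1: "\<forall>u\<in>snd ` Kc. \<bar>u\<bar> \<le> s1"
    using compact_imp_bounded[OF cs] unfolding bounded_real by blast
  have s01: "s0 \<le> s1" using s0K s1 by force
  have cf: "compact (fst ` Kc)" by (rule compact_continuous_image[OF continuous_on_fst[OF continuous_on_id] Kc(1)])
  obtain B where B: "\<forall>u\<in>fst ` Kc. norm u \<le> B"
    using compact_imp_bounded[OF cf] unfolding bounded_iff by blast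
  have B0: "B \<ge> 0" using B False by (meson all_not_in_conv image_eqI norm_ge_zero order_trans)
  define Fl where "Fl = (at_top :: real filter) \<times>\<^sub>F principal Kc"
  have inK: "eventually (\<lambda>q. snd q \<in> Kc) Fl"
    using filterlim_snd[where F="at_top :: real filter" and G="principal Kc"] unfolding Fl_def filterlim_iff
    by (auto simp: eventually_principal)
  define R where "R i q = (1 / snd (snd q)) * fm ((y (fst q) i - x i \<bullet> fst (snd q)) / snd (snd q)) / fm (y (fst q) i) / snd (snd q) powr (2 * del)"
    for i and q :: "real \<times> (real^'p) \<times> real"
  have Rlim: "(R i \<longlongrightarrow> 1) Fl" if i: "i \<in> LI" for i
  proof -
    have zlim: "filterlim (\<lambda>q. \<bar>y (fst q) i\<bar>) at_top Fl"
      unfolding Fl_def by (rule filterlim_compose[OF divL[OF i] filterlim_fst])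
    have bnd: "eventually (\<lambda>q. \<bar>x i \<bullet> fst (snd q)\<bar> \<le> norm (x i) * B \<and> s0 \<le> snd (snd q) \<and> snd (snd q) \<le> s1) Fl"
      using inK
    proof eventually_elim
      case (elim q)
      have "\<bar>x i \<bullet> fst (snd q)\<bar> \<le> norm (x i) * norm (fst (snd q))" by (rule Cauchy_Schwarz_ineq2)
      also have "\<dots> \<le> norm (x i) * B" using B elim by (intro mult_left_mono) auto
      finally show ?case using elim s0le s1 by force
    qed
    show ?thesis
      unfolding R_def fm_def
      by (rule ratio_lim[OF gam del s zlim bnd s0 s01]) (use B0 in simp)
  qed
  have Plim: "((\<lambda>q. \<Prod>i\<in>LI. R i q) \<longlongrightarrow> 1) Fl"
    using tendsto_prod[of LI R "\<lambda>_. 1" Fl] Rlim by simp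
  show ?thesis
  proof (rule uniform_limitI)
    fix e :: real assume e: "e > 0"
    define Bs where "Bs = s1 powr (2 * real (card LI) * del)"
    have Bs: "Bs > 0" using s0 s01 by (simp add: Bs_def)
    have "eventually (\<lambda>q. dist (\<Prod>i\<in>LI. R i q) 1 < e / Bs) Fl"
      using tendstoD[OF Plim] e Bs by simp
    then obtain Pf Pg where Pf: "eventually Pf at_top" and Pg: "eventually Pg (principal Kc)"
      and PP: "\<And>w p. Pf w \<Longrightarrow> Pg p \<Longrightarrow> dist (\<Prod>i\<in>LI. R i (w, p)) 1 < e / Bs"
      unfolding Fl_def eventually_prod_filter by blast
    have Pg': "\<And>p. p \<in> Kc \<Longrightarrow> Pg p" using Pg by (simp add: eventually_principal)
    show "\<forall>\<^sub>F w in at_top. \<forall>p\<in>Kc. dist ((\<lambda>\<omega> (\<beta>, \<sigma>).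
        (upost TYPE('p) (fmix s gam del) prior x (y \<omega>) {1..n} \<beta> \<sigma>
          / upost TYPE('p) (fmix s gam del) prior x (y \<omega>) KI \<beta> \<sigma>)
        / (\<Prod>i\<in>LI. fmix s gam del (y \<omega> i))) w p) ((\<lambda>(\<beta>, \<sigma>). \<sigma> powr (2 * real (card LI) * del)) p) < e"
      using Pf
    proof eventually_elim
      case (elim w)
      show ?case
      proof
        fix p assume pK: "p \<in> Kc"
        obtain \<beta> \<sigma> where p: "p = (\<beta>, \<sigma>)" by (cases p)
        have sig: "\<sigma> > 0" using pK Kc(2) p by auto
        have sig1: "\<sigma> \<le> s1" using pK s1 p by force
        have id: "upost TYPE('p) fm prior x (y w) {1..n} \<beta> \<sigma> / upost TYPE('p) fm prior x (y w) KI \<beta> \<sigma> / (\<Prod>i\<in>LI. fm (y w i))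
          = \<sigma> powr (2 * real (card LI) * del) * (\<Prod>i\<in>LI. R i (w, p))"
          using upost_ratio[where f=fm and prior=prior and \<beta>=\<beta> and \<sigma>=\<sigma> and x=x and yy="y w" and del=del, OF sig fpos prior_pos[OF sig] part]
          unfolding R_def p by (simp only: fst_conv snd_conv)
        define c where "c = \<sigma> powr (2 * real (card LI) * del)"
        have c0: "c > 0" using sig by (simp add: c_def)
        have cB: "c \<le> Bs" unfolding c_def Bs_def using sig sig1 del by (intro powr_mono2) auto
        have d: "\<bar>(\<Prod>i\<in>LI. R i (w, p)) - 1\<bar> < e / Bs" using PP[OF elim Pg'[OF pK]] by (simp add: dist_real_def)
        have "\<bar>c * (\<Prod>i\<in>LI. R i (w, p)) - c\<bar> = c * \<bar>(\<Prod>i\<in>LI. R i (w, p)) - 1\<bar>"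
        proof -
          have "c * (\<Prod>i\<in>LI. R i (w, p)) - c = c * ((\<Prod>i\<in>LI. R i (w, p)) - 1)" by (simp add: algebra_simps)
          then show ?thesis using c0 by (simp add: abs_mult)
        qed
        also have "\<dots> \<le> Bs * \<bar>(\<Prod>i\<in>LI. R i (w, p)) - 1\<bar>" using cB by (intro mult_right_mono) auto
        also have "\<dots> < Bs * (e / Bs)" using d Bs by (intro mult_strict_left_mono) auto
        also have "\<dots> = e" using Bs by simp
        finally have "\<bar>c * (\<Prod>i\<in>LI. R i (w, p)) - c\<bar> < e" .
        then show "dist ((\<lambda>\<omega> (\<beta>, \<sigma>).
          (upost TYPE('p) (fmix s gam del) prior x (y \<omega>) {1..n} \<beta> \<sigma>
            / upost TYPE('p) (fmix s gam del) prior x (y \<omega>) KI \<beta> \<sigma>)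
          / (\<Prod>i\<in>LI. fmix s gam del (y \<omega> i))) w p) ((\<lambda>(\<beta>, \<sigma>). \<sigma> powr (2 * real (card LI) * del)) p) < e"
          using id unfolding p c_def fm_def by (simp add: dist_real_def)
      qed
    qed
  qed
qed

end
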